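(* Suppose the p-values are conditionally super-uniform: for every $t$ with $\theta_t=0$, $\mathbb{P}(p_t\le U\mid\mathcal{F}_{t-1})\le U$ a.s. for every $\mathcal F_{t-1}$-measurable $[0,1]$-valued $U$. (a) If the $\mathcal{F}_{t-1}$-measurable testing levels satisfy, a.s. for every $t\ge1$, $\widehat{\mathrm{FDP}}^{\mathrm{pL\text{-}RAI}}(t):=\sum_{j=1}^t\frac{\alpha_j}{R_{j-1}+1}\le\alpha$, then $\mathrm{FDR}(t)\le\alpha$ for all $t$. (b) Let $(\lambda_t)_{t\ge1}$ be $(0,1)$-valued with each $\lambda_t$ $\mathcal{F}_{t-1}$-measurable, and let $\widehat{\mathrm{FDP}}^{\mathrm{pS\text{-}RAI}}(t):=\sum_{j=1}^t\frac{\alpha_j}{R_{j-1}+1}\cdot\frac{\mathbb{1}\{p_j>\lambda_j\}}{1-\lambda_j}$. Then (i) $\mathbb{E}[\widehat{\mathrm{FDP}}^{\mathrm{pS\text{-}RAI}}(t)]\ge\mathbb{E}[\mathrm{FDP}^*_{\mathrm{e}}(t)]$ for all $t$, where $\mathrm{FDP}^*_{\mathrm{e}}(t)=\sum_{j\in\mathcal{H}_0(t)}\alpha_j/(R_{j-1}+1)$; and (ii) if the testing levels satisfy $\widehat{\mathrm{FDP}}^{\mathrm{pS\text{-}RAI}}(t)\le\alpha$ a.s. for every $t$, then $\mathrm{FDR}(t)\le\alpha$ for all $t$.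
   Context: Let $\alpha\in(0,1)$ be a target level. Hypotheses are indexed by $t=1,2,\dots$; $\theta_t\in\{0,1\}$ is a fixed (non-random) indicator with $\theta_t=0$ iff the $t$-th null hypothesis is true. $p_1,p_2,\dots$ are $[0,1]$-valued random variables (p-values). Testing levels $\alpha_1,\alpha_2,\dots$ are $[0,1]$-valued random variables and the decisions are $\delta_t=\mathbb{1}\{p_t\le\alpha_t\}$. Let $\mathcal{F}_t=\sigma(\delta_1,\dots,\delta_t)$, $\mathcal{F}_0$ trivial; each $\alpha_t$ is required to be $\mathcal{F}_{t-1}$-measurable. $R_t=\sum_{j=1}^t\delta_j$, $R_0=0$. $\mathcal{H}_0(t)=\{j\le t:\theta_j=0\}$. $\mathrm{FDR}(t)=\mathbb{E}\big[\sum_{j\in\mathcal{H}_0(t)}\delta_j/(R_t\vee 1)\big]$. *)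

theory Defs
  imports "HOL-Probability.Probability"
begin

text \<open>Online multiple testing. Hypotheses indexed by t = 1, 2, ...; index 0 is unused.
  p t = p-value, alpha t = testing level, theta t = 0 iff t-th null is true.\<close>

definition delta :: "(nat \<Rightarrow> 'a \<Rightarrow> real) \<Rightarrow> (nat \<Rightarrow> 'a \<Rightarrow> real) \<Rightarrow> nat \<Rightarrow> 'a \<Rightarrow> real" where
  "delta p alpha t \<omega> = (if p t \<omega> \<le> alpha t \<omega> then 1 else 0)"

definition rejections :: "(nat \<Rightarrow> 'a \<Rightarrow> real) \<Rightarrow> (nat \<Rightarrow> 'a \<Rightarrow> real) \<Rightarrow> nat \<Rightarrow> 'a \<Rightarrow> real" where
  "rejections p alpha t \<omega> = (\<Sum>j = 1..t. delta p alpha j \<omega>)"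

text \<open>F_t = sigma(delta_1, ..., delta_t); F_0 is trivial. Since each delta_j is {0,1}-valued,
  sigma(delta_j) is generated by the event {p_j <= alpha_j}.\<close>
definition filt :: "'a measure \<Rightarrow> (nat \<Rightarrow> 'a \<Rightarrow> real) \<Rightarrow> (nat \<Rightarrow> 'a \<Rightarrow> real) \<Rightarrow> nat \<Rightarrow> 'a measure" where
  "filt M p alpha t = sigma (space M) {{\<omega> \<in> space M. p j \<omega> \<le> alpha j \<omega>} | j. j \<in> {1..t}}"

definition H0 :: "(nat \<Rightarrow> nat) \<Rightarrow> nat \<Rightarrow> nat set" where
  "H0 theta t = {j \<in> {1..t}. theta j = 0}"

definition FDR :: "'a measure \<Rightarrow> (nat \<Rightarrow> nat) \<Rightarrow> (nat \<Rightarrow> 'a \<Rightarrow> real) \<Rightarrow> (nat \<Rightarrow> 'a \<Rightarrow> real) \<Rightarrow> nat \<Rightarrow> real" where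
  "FDR M theta p alpha t =
     (\<integral>\<omega>. (\<Sum>j\<in>H0 theta t. delta p alpha j \<omega>) / max (rejections p alpha t \<omega>) 1 \<partial>M)"

definition FDPhat_pLRAI :: "(nat \<Rightarrow> 'a \<Rightarrow> real) \<Rightarrow> (nat \<Rightarrow> 'a \<Rightarrow> real) \<Rightarrow> nat \<Rightarrow> 'a \<Rightarrow> real" where
  "FDPhat_pLRAI p alpha t \<omega> = (\<Sum>j = 1..t. alpha j \<omega> / (rejections p alpha (j - 1) \<omega> + 1))"

definition FDPhat_pSRAI :: "(nat \<Rightarrow> 'a \<Rightarrow> real) \<Rightarrow> (nat \<Rightarrow> 'a \<Rightarrow> real) \<Rightarrow> (nat \<Rightarrow> 'a \<Rightarrow> real) \<Rightarrow> nat \<Rightarrow> 'a \<Rightarrow> real" where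
  "FDPhat_pSRAI p alpha lam t \<omega> =
     (\<Sum>j = 1..t. alpha j \<omega> / (rejections p alpha (j - 1) \<omega> + 1)
        * ((if p j \<omega> > lam j \<omega> then 1 else 0) / (1 - lam j \<omega>)))"

definition FDPstar_e :: "(nat \<Rightarrow> nat) \<Rightarrow> (nat \<Rightarrow> 'a \<Rightarrow> real) \<Rightarrow> (nat \<Rightarrow> 'a \<Rightarrow> real) \<Rightarrow> nat \<Rightarrow> 'a \<Rightarrow> real" where
  "FDPstar_e theta p alpha t \<omega> = (\<Sum>j\<in>H0 theta t. alpha j \<omega> / (rejections p alpha (j - 1) \<omega> + 1))"

end

theory Submission
  imports Defs
begin

lemma filt_space[simp]: "space (filt M p alpha t) = space M"
  unfolding filt_def by (simp add: space_measure_of_conv)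

lemma filt_sets: "sets (filt M p alpha t) = sigma_sets (space M) {{\<omega> \<in> space M. p j \<omega> \<le> alpha j \<omega>} | j. j \<in> {1..t}}"
  unfolding filt_def by (rule sets_measure_of) auto

lemma filt_subalg:
  assumes "\<forall>j\<ge>1. p j \<in> borel_measurable M \<and> alpha j \<in> borel_measurable M"
  shows "subalgebra M (filt M p alpha t)"
  unfolding subalgebra_def
proof
  show "space (filt M p alpha t) = space M" by simp
  have "{{\<omega> \<in> space M. p j \<omega> \<le> alpha j \<omega>} | j. j \<in> {1..t}} \<subseteq> sets M"
    using assms by auto
  then show "sets (filt M p alpha t) \<subseteq> sets M"
    unfolding filt_sets by (rule sets.sigma_sets_subset)
qed

lemma delta_filt_meas:
  assumes "1 \<le> j" "j \<le> t"
  shows "delta p alpha j \<in> borel_measurable (filt M p alpha t)"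
proof -
  have S: "{\<omega> \<in> space M. p j \<omega> \<le> alpha j \<omega>} \<in> sets (filt M p alpha t)"
    unfolding filt_sets using assms by (intro sigma_sets.Basic) auto
  have "indicator {\<omega> \<in> space M. p j \<omega> \<le> alpha j \<omega>} \<in> borel_measurable (filt M p alpha t)"
    using S by (rule borel_measurable_indicator)
  then show ?thesis
    by (rule measurable_cong[THEN iffD1, rotated]) (auto simp: delta_def indicator_def)
qed

lemma rej_filt_meas: "rejections p alpha k \<in> borel_measurable (filt M p alpha k)"
  unfolding rejections_def[abs_def]
  by (intro borel_measurable_sum delta_filt_meas) auto

lemma rej_nonneg: "0 \<le> rejections p alpha k \<omega>"
  unfolding rejections_def delta_def by (intro sum_nonneg) auto

lemma rej_mono: "j \<le> t \<Longrightarrow> rejections p alpha j \<omega> \<le> rejections p alpha t \<omega>"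
  unfolding rejections_def delta_def by (intro sum_mono2) auto

lemma rej_Suc: "rejections p alpha (Suc k) \<omega> = rejections p alpha k \<omega> + delta p alpha (Suc k) \<omega>"
  unfolding rejections_def by simp

lemma nn_real_cond_exp:
  assumes "prob_space M" "subalgebra M F"
    and [measurable]: "f \<in> borel_measurable M" and f01: "\<forall>x\<in>space M. 0 \<le> f x \<and> f x \<le> 1"
  shows "AE x in M. nn_cond_exp M F (\<lambda>x. ennreal (f x)) x = ennreal (real_cond_exp M F f x)"
proof -
  interpret prob_space M by fact
  interpret finite_measure_subalgebra M F
    by unfold_locales (use assms(2) in auto)
  have "AE x in M. nn_cond_exp M F (\<lambda>x. ennreal (- f x)) x = nn_cond_exp M F (\<lambda>x. 0) x"
    by (rule nn_cond_exp_cong) (use f01 in \<open>auto simp: ennreal_neg\<close>)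
  moreover have "AE x in M. (\<lambda>x. 0) x = nn_cond_exp M F (\<lambda>x. 0) x"
    by (rule nn_cond_exp_F_meas) simp
  moreover have "AE x in M. nn_cond_exp M F (\<lambda>x. ennreal (f x)) x \<le> nn_cond_exp M F (\<lambda>x. 1) x"
    by (rule nn_cond_exp_mono) (use f01 in auto)
  moreover have "AE x in M. (\<lambda>x. 1) x = nn_cond_exp M F (\<lambda>x. 1) x"
    by (rule nn_cond_exp_F_meas) simp
  ultimately show ?thesis
    unfolding real_cond_exp_def
    by eventually_elim (auto simp: ennreal_enn2real_if top_unique)
qed

lemma key_le:
  assumes P: "prob_space M" and sub: "subalgebra M F"
    and [measurable]: "q \<in> borel_measurable M" "U \<in> borel_measurable F"
    and U01: "\<forall>x\<in>space M. 0 \<le> U x \<and> U x \<le> 1"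
    and ce: "AE x in M. real_cond_exp M F (indicator {x\<in>space M. q x \<le> U x}) x \<le> U x"
    and hm [measurable]: "h \<in> borel_measurable F"
  shows "(\<integral>\<^sup>+x. h x * indicator {x\<in>space M. q x \<le> U x} x \<partial>M) \<le> (\<integral>\<^sup>+x. h x * ennreal (U x) \<partial>M)"
proof -
  interpret prob_space M by fact
  interpret finite_measure_subalgebra M F
    by unfold_locales (use sub in auto)
  have Um [measurable]: "U \<in> borel_measurable M" by (rule measurable_from_subalg[OF sub]) simp
  have Sm: "{x\<in>space M. q x \<le> U x} \<in> sets M" by measurable
  have "(\<integral>\<^sup>+x. h x * indicator {x\<in>space M. q x \<le> U x} x \<partial>M)
      = (\<integral>\<^sup>+x. h x * nn_cond_exp M F (\<lambda>x. ennreal (indicator {x\<in>space M. q x \<le> U x} x)) x \<partial>M)"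
    by (subst nn_cond_exp_intg) (auto simp: ennreal_indicator Sm)
  also have "\<dots> \<le> (\<integral>\<^sup>+x. h x * ennreal (U x) \<partial>M)"
  proof (rule nn_integral_mono_AE)
    have "AE x in M. nn_cond_exp M F (\<lambda>x. ennreal (indicator {x\<in>space M. q x \<le> U x} x)) x
        = ennreal (real_cond_exp M F (indicator {x\<in>space M. q x \<le> U x}) x)"
      by (rule nn_real_cond_exp[OF P sub]) (auto simp: Sm)
    then show "AE x in M. h x * nn_cond_exp M F (\<lambda>x. ennreal (indicator {x\<in>space M. q x \<le> U x} x)) x
        \<le> h x * ennreal (U x)"
      using ce by eventually_elim (auto intro!: mult_left_mono ennreal_leI)
  qed
  finally show ?thesis .
qed

lemma key_ge:
  assumes P: "prob_space M" and sub: "subalgebra M F"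
    and [measurable]: "q \<in> borel_measurable M" "U \<in> borel_measurable F"
    and U01: "\<forall>x\<in>space M. 0 \<le> U x \<and> U x \<le> 1"
    and ce: "AE x in M. real_cond_exp M F (indicator {x\<in>space M. q x \<le> U x}) x \<le> U x"
    and hm [measurable]: "h \<in> borel_measurable F"
  shows "(\<integral>\<^sup>+x. h x * ennreal (1 - U x) \<partial>M) \<le> (\<integral>\<^sup>+x. h x * indicator {x\<in>space M. \<not> q x \<le> U x} x \<partial>M)"
proof -
  interpret prob_space M by fact
  interpret finite_measure_subalgebra M F
    by unfold_locales (use sub in auto)
  have Um [measurable]: "U \<in> borel_measurable M" by (rule measurable_from_subalg[OF sub]) simp
  have Sm: "{x\<in>space M. q x \<le> U x} \<in> sets M" by measurable
  have Tm: "{x\<in>space M. \<not> q x \<le> U x} \<in> sets M" by measurable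
  have intS: "integrable M (indicator {x\<in>space M. q x \<le> U x} :: 'a \<Rightarrow> real)"
    using Sm by (intro integrable_real_indicator) (auto simp: less_top[symmetric])
  have "AE x in M. real_cond_exp M F (indicator {x\<in>space M. \<not> q x \<le> U x}) x
       = real_cond_exp M F (\<lambda>x. 1 - indicator {x\<in>space M. q x \<le> U x} x) x"
    by (rule real_cond_exp_cong) (auto simp: Sm Tm indicator_def)
  moreover have "AE x in M. real_cond_exp M F (\<lambda>x. 1 - indicator {x\<in>space M. q x \<le> U x} x) x
       = real_cond_exp M F (\<lambda>x. 1) x - real_cond_exp M F (indicator {x\<in>space M. q x \<le> U x}) x"
    by (rule real_cond_exp_diff) (use intS in auto)
  moreover have "AE x in M. real_cond_exp M F (\<lambda>x. 1) x = 1"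
    by (rule real_cond_exp_F_meas) auto
  moreover have "AE x in M. nn_cond_exp M F (\<lambda>x. ennreal (indicator {x\<in>space M. \<not> q x \<le> U x} x)) x
        = ennreal (real_cond_exp M F (indicator {x\<in>space M. \<not> q x \<le> U x}) x)"
    by (rule nn_real_cond_exp[OF P sub]) (auto simp: Tm)
  ultimately have ae: "AE x in M. ennreal (1 - U x) \<le> nn_cond_exp M F (\<lambda>x. ennreal (indicator {x\<in>space M. \<not> q x \<le> U x} x)) x"
    using ce by eventually_elim (auto intro!: ennreal_leI)
  have "(\<integral>\<^sup>+x. h x * ennreal (1 - U x) \<partial>M)
      \<le> (\<integral>\<^sup>+x. h x * nn_cond_exp M F (\<lambda>x. ennreal (indicator {x\<in>space M. \<not> q x \<le> U x} x)) x \<partial>M)"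
    by (rule nn_integral_mono_AE) (use ae in \<open>eventually_elim, auto intro!: mult_left_mono\<close>)
  also have "\<dots> = (\<integral>\<^sup>+x. h x * indicator {x\<in>space M. \<not> q x \<le> U x} x \<partial>M)"
    by (subst nn_cond_exp_intg) (auto simp: ennreal_indicator Tm)
  finally show ?thesis .
qed

lemma nn_integral_sum_ennreal:
  assumes "finite A" "\<And>j. j \<in> A \<Longrightarrow> f j \<in> borel_measurable M"
    "\<And>j \<omega>. j \<in> A \<Longrightarrow> \<omega> \<in> space M \<Longrightarrow> 0 \<le> f j \<omega>"
  shows "(\<integral>\<^sup>+\<omega>. ennreal (\<Sum>j\<in>A. f j \<omega>) \<partial>M) = (\<Sum>j\<in>A. \<integral>\<^sup>+\<omega>. ennreal (f j \<omega>) \<partial>M)"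
proof -
  have "(\<integral>\<^sup>+\<omega>. ennreal (\<Sum>j\<in>A. f j \<omega>) \<partial>M) = (\<integral>\<^sup>+\<omega>. (\<Sum>j\<in>A. ennreal (f j \<omega>)) \<partial>M)"
    by (rule nn_integral_cong) (use assms(3) in \<open>simp add: sum_ennreal\<close>)
  also have "\<dots> = (\<Sum>j\<in>A. \<integral>\<^sup>+\<omega>. ennreal (f j \<omega>) \<partial>M)"
    by (rule nn_integral_sum) (use assms(2) in auto)
  finally show ?thesis .
qed

theorem proposition4:
  fixes M :: "'a measure" and p alpha lam :: "nat \<Rightarrow> 'a \<Rightarrow> real"
    and theta :: "nat \<Rightarrow> nat" and a :: real
  assumes "prob_space M"
    and "0 < a" and "a < 1"
    and "\<forall>t. theta t \<in> {0, 1}"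
    and "\<forall>t\<ge>1. p t \<in> borel_measurable M \<and> (\<forall>\<omega>\<in>space M. 0 \<le> p t \<omega> \<and> p t \<omega> \<le> 1)"
    and "\<forall>t\<ge>1. alpha t \<in> borel_measurable M \<and> alpha t \<in> borel_measurable (filt M p alpha (t - 1))
           \<and> (\<forall>\<omega>\<in>space M. 0 \<le> alpha t \<omega> \<and> alpha t \<omega> \<le> 1)"
    and superunif: "\<forall>t\<ge>1. theta t = 0 \<longrightarrow>
           (\<forall>U. U \<in> borel_measurable (filt M p alpha (t - 1)) \<and> (\<forall>\<omega>\<in>space M. 0 \<le> U \<omega> \<and> U \<omega> \<le> 1)
              \<longrightarrow> (AE \<omega> in M. real_cond_exp M (filt M p alpha (t - 1))
                      (indicator {\<omega>\<in>space M. p t \<omega> \<le> U \<omega>}) \<omega> \<le> U \<omega>))"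
  shows "((\<forall>t\<ge>1. AE \<omega> in M. FDPhat_pLRAI p alpha t \<omega> \<le> a)
            \<longrightarrow> (\<forall>t\<ge>1. FDR M theta p alpha t \<le> a))
       \<and> ((\<forall>t\<ge>1. lam t \<in> borel_measurable (filt M p alpha (t - 1))
                  \<and> (\<forall>\<omega>\<in>space M. 0 < lam t \<omega> \<and> lam t \<omega> < 1))
            \<longrightarrow> (\<forall>t\<ge>1. (\<integral>\<^sup>+\<omega>. ennreal (FDPhat_pSRAI p alpha lam t \<omega>) \<partial>M)
                          \<ge> (\<integral>\<^sup>+\<omega>. ennreal (FDPstar_e theta p alpha t \<omega>) \<partial>M))
              \<and> ((\<forall>t\<ge>1. AE \<omega> in M. FDPhat_pSRAI p alpha lam t \<omega> \<le> a)
                   \<longrightarrow> (\<forall>t\<ge>1. FDR M theta p alpha t \<le> a)))"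
proof -
  interpret prob_space M by fact
  note P = \<open>prob_space M\<close>
  have pm: "\<And>j. 1 \<le> j \<Longrightarrow> p j \<in> borel_measurable M" using assms(5) by auto
  have am: "\<And>j. 1 \<le> j \<Longrightarrow> alpha j \<in> borel_measurable M" using assms(6) by auto
  have amF: "\<And>j. 1 \<le> j \<Longrightarrow> alpha j \<in> borel_measurable (filt M p alpha (j - 1))" using assms(6) by auto
  have a01: "\<And>j \<omega>. 1 \<le> j \<Longrightarrow> \<omega> \<in> space M \<Longrightarrow> 0 \<le> alpha j \<omega> \<and> alpha j \<omega> \<le> 1" using assms(6) by auto
  have sub: "\<And>k. subalgebra M (filt M p alpha k)"
    by (rule filt_subalg) (use pm am in auto)
  have RmF: "\<And>k. (\<lambda>\<omega>. rejections p alpha k \<omega>) \<in> borel_measurable (filt M p alpha k)"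
    using rej_filt_meas by blast
  have Rm: "\<And>k. (\<lambda>\<omega>. rejections p alpha k \<omega>) \<in> borel_measurable M"
    by (rule measurable_from_subalg[OF sub RmF])
  have dm: "\<And>j. 1 \<le> j \<Longrightarrow> delta p alpha j \<in> borel_measurable M"
    by (rule measurable_from_subalg[OF sub delta_filt_meas]) auto
  have Hsub: "\<And>t. H0 theta t \<subseteq> {1..t}" unfolding H0_def by auto
  have Hfin: "\<And>t. finite (H0 theta t)" using Hsub by (meson finite_atLeastAtMost finite_subset)

  have N1: "(\<integral>\<^sup>+\<omega>. ennreal (delta p alpha j \<omega> / (rejections p alpha (j - 1) \<omega> + 1)) \<partial>M)
      \<le> (\<integral>\<^sup>+\<omega>. ennreal (alpha j \<omega> / (rejections p alpha (j - 1) \<omega> + 1)) \<partial>M)"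
    if j1: "1 \<le> j" and th: "theta j = 0" for j
  proof -
    let ?F = "filt M p alpha (j - 1)"
    let ?h = "\<lambda>\<omega>. ennreal (1 / (rejections p alpha (j - 1) \<omega> + 1))"
    have hm: "?h \<in> borel_measurable ?F" using RmF[of "j - 1"] by measurable
    have ce: "AE \<omega> in M. real_cond_exp M ?F (indicator {\<omega>\<in>space M. p j \<omega> \<le> alpha j \<omega>}) \<omega> \<le> alpha j \<omega>"
      using superunif j1 th amF[OF j1] a01[OF j1] by blast
    have K: "(\<integral>\<^sup>+x. ?h x * indicator {x\<in>space M. p j x \<le> alpha j x} x \<partial>M) \<le> (\<integral>\<^sup>+x. ?h x * ennreal (alpha j x) \<partial>M)"
      by (rule key_le[OF P sub pm[OF j1] amF[OF j1] _ ce hm]) (use a01[OF j1] in auto)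
    have L: "(\<integral>\<^sup>+\<omega>. ennreal (delta p alpha j \<omega> / (rejections p alpha (j - 1) \<omega> + 1)) \<partial>M)
        = (\<integral>\<^sup>+x. ?h x * indicator {x\<in>space M. p j x \<le> alpha j x} x \<partial>M)"
      by (rule nn_integral_cong) (auto simp: delta_def indicator_def)
    have R: "(\<integral>\<^sup>+x. ?h x * ennreal (alpha j x) \<partial>M)
        = (\<integral>\<^sup>+\<omega>. ennreal (alpha j \<omega> / (rejections p alpha (j - 1) \<omega> + 1)) \<partial>M)"
      by (rule nn_integral_cong) (use a01[OF j1] rej_nonneg in \<open>auto simp: ennreal_mult''[symmetric]\<close>)
    show ?thesis using K L R by simp
  qed

  have star: "(\<integral>\<^sup>+\<omega>. ennreal ((\<Sum>j\<in>H0 theta t. delta p alpha j \<omega>) / max (rejections p alpha t \<omega>) 1) \<partial>M)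
      \<le> (\<integral>\<^sup>+\<omega>. ennreal (FDPstar_e theta p alpha t \<omega>) \<partial>M)" for t
  proof -
    have pw: "(\<Sum>j\<in>H0 theta t. delta p alpha j \<omega>) / max (rejections p alpha t \<omega>) 1
        \<le> (\<Sum>j\<in>H0 theta t. delta p alpha j \<omega> / (rejections p alpha (j - 1) \<omega> + 1))" for \<omega>
      unfolding sum_divide_distrib
    proof (rule sum_mono)
      fix j assume "j \<in> H0 theta t"
      then have j: "1 \<le> j" "j \<le> t" by (auto simp: H0_def)
      show "delta p alpha j \<omega> / max (rejections p alpha t \<omega>) 1 \<le> delta p alpha j \<omega> / (rejections p alpha (j - 1) \<omega> + 1)"
      proof (cases "p j \<omega> \<le> alpha j \<omega>")
        case True
        obtain k where k: "j = Suc k" using j by (cases j) auto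
        have "rejections p alpha j \<omega> = rejections p alpha (j - 1) \<omega> + 1"
          using True k rej_Suc[of p alpha k \<omega>] by (simp add: delta_def)
        moreover have "rejections p alpha j \<omega> \<le> rejections p alpha t \<omega>" by (rule rej_mono[OF j(2)])
        ultimately show ?thesis using True rej_nonneg[of p alpha "j - 1" \<omega>]
          by (auto simp: delta_def intro!: divide_left_mono)
      qed (simp add: delta_def)
    qed
    have "(\<integral>\<^sup>+\<omega>. ennreal ((\<Sum>j\<in>H0 theta t. delta p alpha j \<omega>) / max (rejections p alpha t \<omega>) 1) \<partial>M)
        \<le> (\<integral>\<^sup>+\<omega>. ennreal (\<Sum>j\<in>H0 theta t. delta p alpha j \<omega> / (rejections p alpha (j - 1) \<omega> + 1)) \<partial>M)"
      by (rule nn_integral_mono) (use pw in \<open>auto intro: ennreal_leI\<close>)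
    also have "\<dots> = (\<Sum>j\<in>H0 theta t. \<integral>\<^sup>+\<omega>. ennreal (delta p alpha j \<omega> / (rejections p alpha (j - 1) \<omega> + 1)) \<partial>M)"
    proof (rule nn_integral_sum_ennreal[OF Hfin])
      fix j assume "j \<in> H0 theta t"
      then have j1: "1 \<le> j" by (auto simp: H0_def)
      show "(\<lambda>\<omega>. delta p alpha j \<omega> / (rejections p alpha (j - 1) \<omega> + 1)) \<in> borel_measurable M"
        using dm[OF j1] Rm[of "j - 1"] by measurable
    next
      fix j \<omega>
      show "0 \<le> delta p alpha j \<omega> / (rejections p alpha (j - 1) \<omega> + 1)"
        using rej_nonneg[of p alpha "j - 1" \<omega>] by (auto simp: delta_def)
    qed
    also have "\<dots> \<le> (\<Sum>j\<in>H0 theta t. \<integral>\<^sup>+\<omega>. ennreal (alpha j \<omega> / (rejections p alpha (j - 1) \<omega> + 1)) \<partial>M)"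
      by (rule sum_mono) (use N1 Hsub in \<open>auto simp: H0_def\<close>)
    also have "\<dots> = (\<integral>\<^sup>+\<omega>. ennreal (FDPstar_e theta p alpha t \<omega>) \<partial>M)"
      unfolding FDPstar_e_def
      by (rule nn_integral_sum_ennreal[OF Hfin, symmetric])
         (use Hsub am Rm rej_nonneg a01 in \<open>auto simp: H0_def intro!: divide_nonneg_nonneg add_nonneg_nonneg\<close>)
    finally show ?thesis .
  qed

  have fdr: "FDR M theta p alpha t \<le> a"
    if hyp: "(\<integral>\<^sup>+\<omega>. ennreal (FDPstar_e theta p alpha t \<omega>) \<partial>M) \<le> ennreal a" for t
  proof -
    have Xm: "(\<lambda>\<omega>. (\<Sum>j\<in>H0 theta t. delta p alpha j \<omega>) / max (rejections p alpha t \<omega>) 1) \<in> borel_measurable M"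
      using dm Rm by (intro borel_measurable_divide borel_measurable_max borel_measurable_sum) (auto simp: H0_def)
    have X0: "AE \<omega> in M. 0 \<le> (\<Sum>j\<in>H0 theta t. delta p alpha j \<omega>) / max (rejections p alpha t \<omega>) 1"
      by (intro AE_I2 divide_nonneg_pos sum_nonneg) (auto simp: delta_def)
    show ?thesis unfolding FDR_def
      by (subst integral_eq_nn_integral[OF Xm X0], rule enn2real_leI)
         (use assms(2) star[of t] hyp in auto)
  qed

  show ?thesis
  proof (rule conjI)
    show "(\<forall>t\<ge>1. AE \<omega> in M. FDPhat_pLRAI p alpha t \<omega> \<le> a) \<longrightarrow> (\<forall>t\<ge>1. FDR M theta p alpha t \<le> a)"
    proof (intro allI impI)
    fix t :: nat assume A: "\<forall>t\<ge>1. AE \<omega> in M. FDPhat_pLRAI p alpha t \<omega> \<le> a" and t: "t \<ge> 1"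
    have "(\<integral>\<^sup>+\<omega>. ennreal (FDPstar_e theta p alpha t \<omega>) \<partial>M) \<le> (\<integral>\<^sup>+\<omega>. ennreal a \<partial>M)"
    proof (rule nn_integral_mono_AE)
      show "AE \<omega> in M. ennreal (FDPstar_e theta p alpha t \<omega>) \<le> ennreal a"
        using AE_space A[rule_format, OF t]
      proof (eventually_elim)
        fix \<omega> assume "\<omega> \<in> space M" and le: "FDPhat_pLRAI p alpha t \<omega> \<le> a"
        have "FDPstar_e theta p alpha t \<omega> \<le> FDPhat_pLRAI p alpha t \<omega>"
          unfolding FDPstar_e_def FDPhat_pLRAI_def
        proof (rule sum_mono2)
          show "finite {1..t}" by simp
          show "H0 theta t \<subseteq> {1..t}" by (rule Hsub)
          fix b assume "b \<in> {1..t} - H0 theta t"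
          then have b1: "1 \<le> b" by auto
          show "0 \<le> alpha b \<omega> / (rejections p alpha (b - 1) \<omega> + 1)"
            using a01[OF b1 \<open>\<omega> \<in> space M\<close>] rej_nonneg[of p alpha "b - 1" \<omega>] by simp
        qed
        then show "ennreal (FDPstar_e theta p alpha t \<omega>) \<le> ennreal a" using le by (auto intro: ennreal_leI)
      qed
    qed
    then show "FDR M theta p alpha t \<le> a" by (intro fdr) (simp add: emeasure_space_1)
    qed
  next
    show "(\<forall>t\<ge>1. lam t \<in> borel_measurable (filt M p alpha (t - 1))
                  \<and> (\<forall>\<omega>\<in>space M. 0 < lam t \<omega> \<and> lam t \<omega> < 1))
            \<longrightarrow> (\<forall>t\<ge>1. (\<integral>\<^sup>+\<omega>. ennreal (FDPhat_pSRAI p alpha lam t \<omega>) \<partial>M)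
                          \<ge> (\<integral>\<^sup>+\<omega>. ennreal (FDPstar_e theta p alpha t \<omega>) \<partial>M))
              \<and> ((\<forall>t\<ge>1. AE \<omega> in M. FDPhat_pSRAI p alpha lam t \<omega> \<le> a)
                   \<longrightarrow> (\<forall>t\<ge>1. FDR M theta p alpha t \<le> a))"
    proof (rule impI)
    assume lamA: "\<forall>t\<ge>1. lam t \<in> borel_measurable (filt M p alpha (t - 1))
                  \<and> (\<forall>\<omega>\<in>space M. 0 < lam t \<omega> \<and> lam t \<omega> < 1)"
    have ge: "(\<integral>\<^sup>+\<omega>. ennreal (FDPstar_e theta p alpha t \<omega>) \<partial>M) \<le> (\<integral>\<^sup>+\<omega>. ennreal (FDPhat_pSRAI p alpha lam t \<omega>) \<partial>M)" for t
    proof -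
      have lm: "\<And>j. 1 \<le> j \<Longrightarrow> lam j \<in> borel_measurable M"
        by (rule measurable_from_subalg[OF sub]) (use lamA in auto)
      have l01: "\<And>j \<omega>. 1 \<le> j \<Longrightarrow> \<omega> \<in> space M \<Longrightarrow> 0 < lam j \<omega> \<and> lam j \<omega> < 1" using lamA by auto
      let ?T = "\<lambda>j \<omega>. alpha j \<omega> / (rejections p alpha (j - 1) \<omega> + 1)
        * ((if p j \<omega> > lam j \<omega> then 1 else 0) / (1 - lam j \<omega>))"
      have Tnn: "0 \<le> ?T j \<omega>" if "1 \<le> j" "\<omega> \<in> space M" for j \<omega>
        using a01[OF that] l01[OF that] rej_nonneg[of p alpha "j - 1" \<omega>] by auto
      have Tm: "?T j \<in> borel_measurable M" if j1: "1 \<le> j" for j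
        using am[OF j1] Rm[of "j - 1"] lm[OF j1] pm[OF j1] by measurable
      have N2: "(\<integral>\<^sup>+\<omega>. ennreal (alpha j \<omega> / (rejections p alpha (j - 1) \<omega> + 1)) \<partial>M)
          \<le> (\<integral>\<^sup>+\<omega>. ennreal (?T j \<omega>) \<partial>M)" if j1: "1 \<le> j" and th: "theta j = 0" for j
      proof -
        let ?F = "filt M p alpha (j - 1)"
        let ?h = "\<lambda>\<omega>. ennreal (alpha j \<omega> / (rejections p alpha (j - 1) \<omega> + 1) / (1 - lam j \<omega>))"
        have lF: "lam j \<in> borel_measurable ?F" using lamA j1 by auto
        have hm: "?h \<in> borel_measurable ?F" using RmF[of "j - 1"] amF[OF j1] lF by measurable
        have ce: "AE \<omega> in M. real_cond_exp M ?F (indicator {\<omega>\<in>space M. p j \<omega> \<le> lam j \<omega>}) \<omega> \<le> lam j \<omega>"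
        proof -
          have "\<forall>\<omega>\<in>space M. 0 \<le> lam j \<omega> \<and> lam j \<omega> \<le> 1" using l01[OF j1] by (auto simp: less_imp_le)
          then show ?thesis using superunif[rule_format, OF j1 th, of "lam j"] lF by blast
        qed
        have K: "(\<integral>\<^sup>+x. ?h x * ennreal (1 - lam j x) \<partial>M) \<le> (\<integral>\<^sup>+x. ?h x * indicator {x\<in>space M. \<not> p j x \<le> lam j x} x \<partial>M)"
          by (rule key_ge[OF P sub pm[OF j1] lF _ ce hm]) (use l01[OF j1] in \<open>auto simp: less_imp_le\<close>)
        have L: "(\<integral>\<^sup>+\<omega>. ennreal (alpha j \<omega> / (rejections p alpha (j - 1) \<omega> + 1)) \<partial>M)
            = (\<integral>\<^sup>+x. ?h x * ennreal (1 - lam j x) \<partial>M)"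
        proof (rule nn_integral_cong)
          fix x assume x: "x \<in> space M"
          have "?h x * ennreal (1 - lam j x) = ennreal (alpha j x / (rejections p alpha (j - 1) x + 1) / (1 - lam j x) * (1 - lam j x))"
            using l01[OF j1 x] a01[OF j1 x] rej_nonneg[of p alpha "j - 1" x]
            by (subst ennreal_mult''[symmetric]) auto
          also have "\<dots> = ennreal (alpha j x / (rejections p alpha (j - 1) x + 1))"
            using l01[OF j1 x] by simp
          finally show "ennreal (alpha j x / (rejections p alpha (j - 1) x + 1)) = ?h x * ennreal (1 - lam j x)" by simp
        qed
        have R: "(\<integral>\<^sup>+x. ?h x * indicator {x\<in>space M. \<not> p j x \<le> lam j x} x \<partial>M) = (\<integral>\<^sup>+\<omega>. ennreal (?T j \<omega>) \<partial>M)"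
        proof (rule nn_integral_cong)
          fix x assume x: "x \<in> space M"
          show "?h x * indicator {x\<in>space M. \<not> p j x \<le> lam j x} x = ennreal (?T j x)"
          proof (cases "p j x > lam j x")
            case True then show ?thesis using x by (simp add: indicator_def)
          next
            case False then show ?thesis using x by (simp add: indicator_def)
          qed
        qed
        show ?thesis using K L R by simp
      qed
      have "(\<integral>\<^sup>+\<omega>. ennreal (FDPstar_e theta p alpha t \<omega>) \<partial>M)
          = (\<Sum>j\<in>H0 theta t. \<integral>\<^sup>+\<omega>. ennreal (alpha j \<omega> / (rejections p alpha (j - 1) \<omega> + 1)) \<partial>M)"
        unfolding FDPstar_e_def
        by (rule nn_integral_sum_ennreal[OF Hfin])
           (use Hsub am Rm rej_nonneg a01 in \<open>auto simp: H0_def intro!: divide_nonneg_nonneg add_nonneg_nonneg\<close>)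
      also have "\<dots> \<le> (\<Sum>j\<in>H0 theta t. \<integral>\<^sup>+\<omega>. ennreal (?T j \<omega>) \<partial>M)"
        by (rule sum_mono) (use N2 in \<open>auto simp: H0_def\<close>)
      also have "\<dots> \<le> (\<Sum>j\<in>{1..t}. \<integral>\<^sup>+\<omega>. ennreal (?T j \<omega>) \<partial>M)"
        by (rule sum_mono2) (use Hsub in auto)
      also have "\<dots> = (\<integral>\<^sup>+\<omega>. ennreal (FDPhat_pSRAI p alpha lam t \<omega>) \<partial>M)"
        unfolding FDPhat_pSRAI_def
        by (rule nn_integral_sum_ennreal[symmetric]) (use Tm Tnn in auto)
      finally show ?thesis .
    qed
    show "(\<forall>t\<ge>1. (\<integral>\<^sup>+\<omega>. ennreal (FDPhat_pSRAI p alpha lam t \<omega>) \<partial>M)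
                          \<ge> (\<integral>\<^sup>+\<omega>. ennreal (FDPstar_e theta p alpha t \<omega>) \<partial>M))
              \<and> ((\<forall>t\<ge>1. AE \<omega> in M. FDPhat_pSRAI p alpha lam t \<omega> \<le> a)
                   \<longrightarrow> (\<forall>t\<ge>1. FDR M theta p alpha t \<le> a))"
    proof (rule conjI)
    show "\<forall>t\<ge>1. (\<integral>\<^sup>+\<omega>. ennreal (FDPhat_pSRAI p alpha lam t \<omega>) \<partial>M)
                          \<ge> (\<integral>\<^sup>+\<omega>. ennreal (FDPstar_e theta p alpha t \<omega>) \<partial>M)"
      using ge by auto
    show "(\<forall>t\<ge>1. AE \<omega> in M. FDPhat_pSRAI p alpha lam t \<omega> \<le> a) \<longrightarrow> (\<forall>t\<ge>1. FDR M theta p alpha t \<le> a)"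
    proof (intro impI allI)
      fix t :: nat assume A: "\<forall>t\<ge>1. AE \<omega> in M. FDPhat_pSRAI p alpha lam t \<omega> \<le> a"
      assume t: "t \<ge> 1"
      show "FDR M theta p alpha t \<le> a"
      proof -
        have "(\<integral>\<^sup>+\<omega>. ennreal (FDPhat_pSRAI p alpha lam t \<omega>) \<partial>M) \<le> (\<integral>\<^sup>+\<omega>. ennreal a \<partial>M)"
          using A[rule_format, OF t] by (rule nn_integral_mono_AE[OF eventually_mono]) (auto intro: ennreal_leI)
        then show "FDR M theta p alpha t \<le> a"
          using ge[of t] by (intro fdr) (simp add: emeasure_space_1)
      qed
    qed
    qed
    qed
  qed
qed

end
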